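(* For every three-qubit state $\rho_{ABC}$, $$S^{\max}(\rho_{ABC})+2\,\tau(\rho_{ABC})\le 3,$$ where $S^{\max}(\rho_{ABC})=\max\{S_{AB},S_{AC},S_{BC}\}$.
   Context: For a two-qubit state $\rho$ let $t_{kl}=\mathrm{Tr}[\rho\,\sigma_k\otimes\sigma_l]$ ($\sigma_k$ Pauli matrices) and $S(\rho)=\sum_{k,l=1}^3 t_{kl}^2$; $S_{ij}=S(\rho_{ij})$ for the two-qubit reduced states $\rho_{ij}$ of $\rho_{ABC}$. $\tau$ is the three-tangle: for a pure state, $\tau=1-|\vec a|^2-\mathcal C_{AB}^2-\mathcal C_{AC}^2$, where $\vec a$ with $a_k=\mathrm{Tr}[\rho_A\sigma_k]$ is the Bloch vector of qubit $A$ and $\mathcal C_{ij}$ is the Wootters concurrence of $\rho_{ij}$ ($\mathcal C(\rho)=\max\{0,\lambda_1-\lambda_2-\lambda_3-\lambda_4\}$, $\lambda_i$ the decreasingly ordered square roots of the eigenvalues of $\rho(\sigma_2\otimes\sigma_2)\rho^*(\sigma_2\otimes\sigma_2)$); for a mixed state $\tau$ is the convex roof, i.e. the minimum of $\sum_n p_n\tau(\psi_n)$ over pure-state decompositions $\rho=\sum_n p_n|\psi_n\rangle\langle\psi_n|$. *)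

theory Defs
  imports "Jordan_Normal_Form.Matrix" "Jordan_Normal_Form.Char_Poly"
begin

text \<open>Qubit ordering for a three-qubit state: basis index 4*a + 2*b + c for qubits A,B,C.
  For two-qubit states: index 2*x + y.\<close>

definition pauli :: "nat \<Rightarrow> complex mat" where
  "pauli k = mat 2 2 (\<lambda>(i,j).
     if k = 1 then (if i \<noteq> j then 1 else 0)
     else if k = 2 then (if i = 0 \<and> j = 1 then - \<i> else if i = 1 \<and> j = 0 then \<i> else 0)
     else if k = 3 then (if i = j then (if i = 0 then 1 else -1) else 0)
     else (if i = j then 1 else 0))"

definition kron :: "complex mat \<Rightarrow> complex mat \<Rightarrow> complex mat" where
  "kron A B = mat (dim_row A * dim_row B) (dim_col A * dim_col B)
     (\<lambda>(i,j). A $$ (i div dim_row B, j div dim_col B) * B $$ (i mod dim_row B, j mod dim_col B))"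

definition adjoint :: "complex mat \<Rightarrow> complex mat" where
  "adjoint A = mat (dim_col A) (dim_row A) (\<lambda>(i,j). cnj (A $$ (j,i)))"

definition mconj :: "complex mat \<Rightarrow> complex mat" where
  "mconj A = mat (dim_row A) (dim_col A) (\<lambda>(i,j). cnj (A $$ (i,j)))"

definition mtrace :: "complex mat \<Rightarrow> complex" where
  "mtrace A = (\<Sum>i<dim_row A. A $$ (i,i))"

definition density_matrix :: "nat \<Rightarrow> complex mat \<Rightarrow> bool" where
  "density_matrix n \<rho> \<longleftrightarrow> \<rho> \<in> carrier_mat n n \<and> adjoint \<rho> = \<rho>
     \<and> (\<forall>v \<in> carrier_vec n. Re (\<Sum>i<n. \<Sum>j<n. cnj (v $ i) * \<rho> $$ (i,j) * v $ j) \<ge> 0)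
     \<and> mtrace \<rho> = 1"

definition red_AB :: "complex mat \<Rightarrow> complex mat" where
  "red_AB \<rho> = mat 4 4 (\<lambda>(i,j). \<Sum>c<2. \<rho> $$ (2*i + c, 2*j + c))"
definition red_AC :: "complex mat \<Rightarrow> complex mat" where
  "red_AC \<rho> = mat 4 4 (\<lambda>(i,j). \<Sum>b<2.
      \<rho> $$ (4*(i div 2) + 2*b + i mod 2, 4*(j div 2) + 2*b + j mod 2))"
definition red_BC :: "complex mat \<Rightarrow> complex mat" where
  "red_BC \<rho> = mat 4 4 (\<lambda>(i,j). \<Sum>a<2. \<rho> $$ (4*a + i, 4*a + j))"
definition red_A :: "complex mat \<Rightarrow> complex mat" where
  "red_A \<rho> = mat 2 2 (\<lambda>(i,j). \<Sum>m<4. \<rho> $$ (4*i + m, 4*j + m))"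

definition tcorr :: "complex mat \<Rightarrow> nat \<Rightarrow> nat \<Rightarrow> complex" where
  "tcorr \<rho> k l = mtrace (\<rho> * kron (pauli k) (pauli l))"

definition Scorr :: "complex mat \<Rightarrow> real" where
  "Scorr \<rho> = (\<Sum>k\<in>{1..3}. \<Sum>l\<in>{1..3}. (Re (tcorr \<rho> k l))\<^sup>2)"

definition wootters_R :: "complex mat \<Rightarrow> complex mat" where
  "wootters_R \<rho> = \<rho> * kron (pauli 2) (pauli 2) * mconj \<rho> * kron (pauli 2) (pauli 2)"

definition wootters_lambdas :: "complex mat \<Rightarrow> real list" where
  "wootters_lambdas \<rho> = rev (sorted_list_of_multiset
     (image_mset (\<lambda>\<mu>. sqrt (Re \<mu>)) (proots (char_poly (wootters_R \<rho>)))))"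

definition concurrence :: "complex mat \<Rightarrow> real" where
  "concurrence \<rho> = (let l = wootters_lambdas \<rho> in max 0 (l!0 - l!1 - l!2 - l!3))"

definition unit_vec8 :: "complex vec \<Rightarrow> bool" where
  "unit_vec8 \<psi> \<longleftrightarrow> \<psi> \<in> carrier_vec 8 \<and> (\<Sum>i<8. (cmod (\<psi> $ i))\<^sup>2) = 1"

definition proj :: "complex vec \<Rightarrow> complex mat" where
  "proj \<psi> = mat (dim_vec \<psi>) (dim_vec \<psi>) (\<lambda>(i,j). \<psi> $ i * cnj (\<psi> $ j))"

definition bloch_A :: "complex mat \<Rightarrow> nat \<Rightarrow> real" where
  "bloch_A \<rho> k = Re (mtrace (red_A \<rho> * pauli k))"

definition tau_pure :: "complex vec \<Rightarrow> real" where
  "tau_pure \<psi> = 1 - (\<Sum>k\<in>{1..3}. (bloch_A (proj \<psi>) k)\<^sup>2)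
      - (concurrence (red_AB (proj \<psi>)))\<^sup>2 - (concurrence (red_AC (proj \<psi>)))\<^sup>2"

definition pure_decomp :: "complex mat \<Rightarrow> (real \<times> complex vec) list \<Rightarrow> bool" where
  "pure_decomp \<rho> ds \<longleftrightarrow> (\<forall>(p,\<psi>) \<in> set ds. p \<ge> 0 \<and> unit_vec8 \<psi>)
     \<and> (\<Sum>(p,\<psi>)\<leftarrow>ds. p) = 1
     \<and> \<rho> = mat 8 8 (\<lambda>(i,j). \<Sum>(p,\<psi>)\<leftarrow>ds. complex_of_real p * (\<psi> $ i * cnj (\<psi> $ j)))"

definition tau :: "complex mat \<Rightarrow> real" where
  "tau \<rho> = Inf {(\<Sum>(p,\<psi>)\<leftarrow>ds. p * tau_pure \<psi>) | ds. pure_decomp \<rho> ds}"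

definition Smax :: "complex mat \<Rightarrow> real" where
  "Smax \<rho> = max (Scorr (red_AB \<rho>)) (max (Scorr (red_AC \<rho>)) (Scorr (red_BC \<rho>)))"

end

theory Submission
  imports Defs
begin

lemma det_Suc: assumes "A \<in> carrier_mat (Suc n) (Suc n)"
  shows "det A = (\<Sum>j<Suc n. A $$ (0,j) * ((-1)^j * det (mat_delete A 0 j)))"
  using laplace_expansion_row[OF assms, of 0] by (simp add: cofactor_def)

lemma md_carrier: "A \<in> carrier_mat (Suc n) (Suc n) \<Longrightarrow> mat_delete A 0 j \<in> carrier_mat n n"
  using mat_delete_carrier[of A "Suc n" "Suc n" 0 j] by simp

lemma md_index: "A \<in> carrier_mat (Suc n) (Suc n) \<Longrightarrow> i' < n \<Longrightarrow> j' < n \<Longrightarrow>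
  mat_delete A 0 j $$ (i',j') = A $$ (Suc i', if j' < j then j' else Suc j')"
  unfolding mat_delete_def by auto

lemma sum2: "(\<Sum>j<2. f j) = f 0 + f (1::nat)" by (simp add: numeral_2_eq_2)
lemma sum3: "(\<Sum>j<3. f j) = f 0 + f (1::nat) + f 2" by (simp add: eval_nat_numeral)
lemma sum4: "(\<Sum>j<4. f j) = f 0 + f (1::nat) + f 2 + f 3" by (simp add: eval_nat_numeral)

lemma det1: assumes "A \<in> carrier_mat 1 1" shows "det A = A $$ (0,0)"
  using det_Suc[of A 0] assms md_carrier[of A 0 0] by simp

lemma det2: assumes A: "A \<in> carrier_mat 2 2"
  shows "det A = A$$(0,0) * A$$(1,1) - A$$(0,1) * A$$(1,0)"
proof -
  have A': "A \<in> carrier_mat (Suc 1) (Suc 1)" using A by (simp add: numeral_2_eq_2)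
  show ?thesis
    using det_Suc[OF A'] md_carrier[OF A'] md_index[OF A']
    by (simp add: det1)
qed

lemma det3: assumes A: "A \<in> carrier_mat 3 3"
  shows "det A = A$$(0,0) * (A$$(1,1) * A$$(2,2) - A$$(1,2) * A$$(2,1))
     - A$$(0,1) * (A$$(1,0) * A$$(2,2) - A$$(1,2) * A$$(2,0))
     + A$$(0,2) * (A$$(1,0) * A$$(2,1) - A$$(1,1) * A$$(2,0))"
proof -
  have A': "A \<in> carrier_mat (Suc 2) (Suc 2)" using A by simp
  show ?thesis
    using det_Suc[OF A'] md_carrier[OF A'] md_index[OF A']
    by (simp add: det2 sum3 numeral_2_eq_2 algebra_simps)
qed

lemma det4: assumes A: "A \<in> carrier_mat 4 4"
  shows "det A = 
       A$$(0,0) * (A$$(1,1) * (A$$(2,2) * A$$(3,3) - A$$(2,3) * A$$(3,2))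
     - A$$(1,2) * (A$$(2,1) * A$$(3,3) - A$$(2,3) * A$$(3,1))
     + A$$(1,3) * (A$$(2,1) * A$$(3,2) - A$$(2,2) * A$$(3,1)))
     - A$$(0,1) * (A$$(1,0) * (A$$(2,2) * A$$(3,3) - A$$(2,3) * A$$(3,2))
     - A$$(1,2) * (A$$(2,0) * A$$(3,3) - A$$(2,3) * A$$(3,0))
     + A$$(1,3) * (A$$(2,0) * A$$(3,2) - A$$(2,2) * A$$(3,0)))
     + A$$(0,2) * (A$$(1,0) * (A$$(2,1) * A$$(3,3) - A$$(2,3) * A$$(3,1))
     - A$$(1,1) * (A$$(2,0) * A$$(3,3) - A$$(2,3) * A$$(3,0))
     + A$$(1,3) * (A$$(2,0) * A$$(3,1) - A$$(2,1) * A$$(3,0)))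
     - A$$(0,3) * (A$$(1,0) * (A$$(2,1) * A$$(3,2) - A$$(2,2) * A$$(3,1))
     - A$$(1,1) * (A$$(2,0) * A$$(3,2) - A$$(2,2) * A$$(3,0))
     + A$$(1,2) * (A$$(2,0) * A$$(3,1) - A$$(2,1) * A$$(3,0)))"
proof -
  have A': "A \<in> carrier_mat (Suc 3) (Suc 3)" using A by simp
  have e: "{..<Suc 3} = {0,1,2,3::nat}" by auto
  show ?thesis
    using det_Suc[OF A'] md_carrier[OF A'] md_index[OF A']
    by (simp add: det3 sum4 numeral_2_eq_2 numeral_3_eq_3 algebra_simps)
qed

lemma sylv_point:
  fixes a b :: "nat \<Rightarrow> nat \<Rightarrow> complex" and x :: complex
  defines "m \<equiv> \<lambda>i j. (if i = j then x else 0) - (a i 0 * b 0 j + a i 1 * b 1 j)"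
  shows "m 0 0 * (m 1 1 * (m 2 2 * m 3 3 - m 2 3 * m 3 2)
     - m 1 2 * (m 2 1 * m 3 3 - m 2 3 * m 3 1)
     + m 1 3 * (m 2 1 * m 3 2 - m 2 2 * m 3 1))
     - m 0 1 * (m 1 0 * (m 2 2 * m 3 3 - m 2 3 * m 3 2)
     - m 1 2 * (m 2 0 * m 3 3 - m 2 3 * m 3 0)
     + m 1 3 * (m 2 0 * m 3 2 - m 2 2 * m 3 0))
     + m 0 2 * (m 1 0 * (m 2 1 * m 3 3 - m 2 3 * m 3 1)
     - m 1 1 * (m 2 0 * m 3 3 - m 2 3 * m 3 0)
     + m 1 3 * (m 2 0 * m 3 1 - m 2 1 * m 3 0))
     - m 0 3 * (m 1 0 * (m 2 1 * m 3 2 - m 2 2 * m 3 1)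
     - m 1 1 * (m 2 0 * m 3 2 - m 2 2 * m 3 0)
     + m 1 2 * (m 2 0 * m 3 1 - m 2 1 * m 3 0))
   = x^4 - x^3 * (\<Sum>k<2. \<Sum>i<4. b k i * a i k) + x^2 * 
      ((\<Sum>i<4. b 0 i * a i 0) * (\<Sum>i<4. b 1 i * a i 1) - (\<Sum>i<4. b 0 i * a i 1) * (\<Sum>i<4. b 1 i * a i 0))"
  unfolding m_def by (simp add: sum4 sum2 power_def algebra_simps)

lemma char_poly_AB:
  fixes A B :: "complex mat"
  assumes A: "A \<in> carrier_mat 4 2" and B: "B \<in> carrier_mat 2 4"
  shows "char_poly (A * B) = [:0, 0, det (B * A), - ((B * A) $$ (0,0) + (B * A) $$ (1,1)), 1:]"
proof -
  have AB: "A * B \<in> carrier_mat 4 4" using A B by simp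
  have BA: "B * A \<in> carrier_mat 2 2" using A B by simp
  have "poly (char_poly (A * B)) x = poly [:0, 0, det (B * A), - ((B * A) $$ (0,0) + (B * A) $$ (1,1)), 1:] x" for x
  proof -
    let ?M = "- char_matrix (A * B) x"
    have M: "?M \<in> carrier_mat 4 4" using AB by simp
    have ent: "?M $$ (i,j) = (if i = j then x else 0) - (A$$(i,0) * B$$(0,j) + A$$(i,1) * B$$(1,j))"
      if "i < 4" "j < 4" for i j
      using that A B by (simp add: char_matrix_def scalar_prod_def sum2 atLeast0LessThan)
    have "poly (char_poly (A * B)) x = det ?M" by (rule char_poly_matrix[OF AB])
    also have "\<dots> = x^4 - x^3 * (\<Sum>k<2. \<Sum>i<4. B$$(k,i) * A$$(i,k)) + x^2 * 
      ((\<Sum>i<4. B$$(0,i) * A$$(i,0)) * (\<Sum>i<4. B$$(1,i) * A$$(i,1)) - (\<Sum>i<4. B$$(0,i) * A$$(i,1)) * (\<Sum>i<4. B$$(1,i) * A$$(i,0)))"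
      unfolding det4[OF M] using sylv_point[of x "\<lambda>i k. A$$(i,k)" "\<lambda>k j. B$$(k,j)"]
      by (simp add: ent)
    also have "\<dots> = poly [:0, 0, det (B * A), - ((B * A) $$ (0,0) + (B * A) $$ (1,1)), 1:] x"
      using A B by (simp add: det2[OF BA] scalar_prod_def sum2 sum4 atLeast0LessThan algebra_simps power_def)
    finally show ?thesis .
  qed
  then show ?thesis using poly_eq_poly_eq_iff by blast
qed

definition rho2 :: "(nat \<Rightarrow> nat \<Rightarrow> complex) \<Rightarrow> complex mat" where
  "rho2 f = mat 4 4 (\<lambda>(i,j). f 0 i * cnj (f 0 j) + f 1 i * cnj (f 1 j))"
definition TT :: "(nat \<Rightarrow> nat \<Rightarrow> complex) \<Rightarrow> nat \<Rightarrow> nat \<Rightarrow> complex" where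
  "TT f c d = - f c 0 * f d 3 + f c 1 * f d 2 + f c 2 * f d 1 - f c 3 * f d 0"
definition gg :: "(nat \<Rightarrow> nat \<Rightarrow> complex) \<Rightarrow> nat \<Rightarrow> nat \<Rightarrow> complex" where
  "gg f d j = (if j = 0 then - f d 3 else if j = 1 then f d 2 else if j = 2 then f d 1 else - f d 0)"
definition Phi :: "(nat \<Rightarrow> nat \<Rightarrow> complex) \<Rightarrow> complex mat" where
  "Phi f = mat 4 2 (\<lambda>(i,c). f c i)"
definition Bm :: "(nat \<Rightarrow> nat \<Rightarrow> complex) \<Rightarrow> complex mat" where
  "Bm f = mat 2 4 (\<lambda>(c,j). cnj (TT f c 0) * gg f 0 j + cnj (TT f c 1) * gg f 1 j)"

definition KK :: "complex mat" where
  "KK = mat 4 4 (\<lambda>(i,j). if i + j = 3 then (if i = 0 \<or> i = 3 then -1 else 1) else 0)"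

lemma kron_yy: "kron (pauli 2) (pauli 2) = KK"
  apply (rule eq_matI)
  apply (auto simp: kron_def pauli_def KK_def)
  apply (auto simp: less_Suc_eq numeral_eq_Suc)
  done

lemma TT_sym: "TT f c d = TT f d c" unfolding TT_def by (simp add: algebra_simps)

lemma wR: "wootters_R (rho2 f) = Phi f * Bm f"
  unfolding wootters_R_def kron_yy
  apply (rule eq_matI)
  apply (simp_all add: rho2_def KK_def Phi_def Bm_def mconj_def scalar_prod_def atLeast0LessThan sum2 sum4)
  apply (auto simp: less_Suc_eq numeral_eq_Suc gg_def TT_def algebra_simps)
  done

definition DD :: "(nat \<Rightarrow> nat \<Rightarrow> complex) \<Rightarrow> complex" where
  "DD f = TT f 0 0 * TT f 1 1 - TT f 0 1 * TT f 1 0"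
definition tt :: "(nat \<Rightarrow> nat \<Rightarrow> complex) \<Rightarrow> real" where
  "tt f = (cmod (TT f 0 0))^2 + (cmod (TT f 1 1))^2 + 2 * (cmod (TT f 0 1))^2"

lemma gT: "(\<Sum>j<4. gg f d j * f e j) = TT f d e"
    by (simp add: sum4 gg_def TT_def algebra_simps)

lemma BA_ent: assumes "c < 2" "e < 2"
  shows "(Bm f * Phi f) $$ (c,e) = cnj (TT f c 0) * TT f 0 e + cnj (TT f c 1) * TT f 1 e"
proof -
  have "(Bm f * Phi f) $$ (c,e) = (\<Sum>j<4. (cnj (TT f c 0) * gg f 0 j + cnj (TT f c 1) * gg f 1 j) * f e j)"
    using assms by (simp add: Bm_def Phi_def scalar_prod_def atLeast0LessThan)
  also have "\<dots> = cnj (TT f c 0) * (\<Sum>j<4. gg f 0 j * f e j) + cnj (TT f c 1) * (\<Sum>j<4. gg f 1 j * f e j)"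
    by (simp add: sum.distrib sum_distrib_left distrib_right mult.assoc)
  finally show ?thesis by (simp add: gT)
qed

lemma cnorm2: "complex_of_real ((cmod z)^2) = z * cnj z"
  using complex_norm_square by simp

lemma char_poly_wR: "char_poly (wootters_R (rho2 f)) = [:0, 0, of_real ((cmod (DD f))^2), - of_real (tt f), 1:]"
proof -
  have A: "Phi f \<in> carrier_mat 4 2" by (simp add: Phi_def)
  have B: "Bm f \<in> carrier_mat 2 4" by (simp add: Bm_def)
  have BA: "Bm f * Phi f \<in> carrier_mat 2 2" using A B by simp
  have s: "TT f 1 0 = TT f 0 1" "TT f (Suc 0) 0 = TT f 0 (Suc 0)" by (rule TT_sym)+
  have d: "det (Bm f * Phi f) = of_real ((cmod (DD f))^2)"
    unfolding det2[OF BA] cnorm2 by (simp add: BA_ent DD_def s algebra_simps)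
  have t: "(Bm f * Phi f) $$ (0,0) + (Bm f * Phi f) $$ (1,1) = of_real (tt f)"
    unfolding tt_def of_real_add of_real_mult cnorm2 by (simp add: BA_ent s algebra_simps)
  show ?thesis unfolding wR char_poly_AB[OF A B] d t ..
qed

lemma tt_ge: "2 * cmod (DD f) \<le> tt f"
proof -
  have s: "TT f 1 0 = TT f 0 1" by (rule TT_sym)
  have "cmod (DD f) \<le> cmod (TT f 0 0 * TT f 1 1) + cmod (TT f 0 1 * TT f 0 1)"
    unfolding DD_def s by (rule norm_triangle_ineq4)
  also have "\<dots> = cmod (TT f 0 0) * cmod (TT f 1 1) + cmod (TT f 0 1) ^ 2"
    by (simp add: norm_mult power2_eq_square)
  finally have 1: "cmod (DD f) \<le> cmod (TT f 0 0) * cmod (TT f 1 1) + cmod (TT f 0 1) ^ 2" .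
  have 2: "2 * (cmod (TT f 0 0) * cmod (TT f 1 1)) \<le> (cmod (TT f 0 0))^2 + (cmod (TT f 1 1))^2"
    using sum_squares_bound[of "cmod (TT f 0 0)" "cmod (TT f 1 1)"] by simp
  show ?thesis using 1 2 unfolding tt_def by linarith
qed

lemma conc_rho2: "(concurrence (rho2 f))^2 = tt f - 2 * cmod (DD f)"
proof -
  define t where "t = tt f"
  define d where "d = (cmod (DD f))^2"
  define s where "s = sqrt (t^2 - 4*d)"
  define r1 where "r1 = (t + s) / 2"
  define r2 where "r2 = (t - s) / 2"
  have t0: "2 * cmod (DD f) \<le> t" unfolding t_def by (rule tt_ge)
  have cm0: "0 \<le> cmod (DD f)" by simp
  have "(2 * cmod (DD f))^2 \<le> t^2" by (rule power_mono[OF t0]) simp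
  then have "4 * d \<le> t^2" unfolding d_def by (simp add: power_mult_distrib)
  then have s0: "0 \<le> s" and ss: "s^2 = t^2 - 4*d" unfolding s_def by auto
  have "s \<le> t"
  proof -
    have "s \<le> sqrt (t^2)" unfolding s_def d_def by (rule real_sqrt_le_mono) simp
    then show ?thesis using t0 cm0 by simp
  qed
  then have r2: "0 \<le> r2" and r12: "r2 \<le> r1" unfolding r1_def r2_def using s0 by auto
  have sum: "r1 + r2 = t" and prod: "r1 * r2 = d" unfolding r1_def r2_def using ss
    by (auto simp: field_simps power2_eq_square)
  have P: "[:0, 0, of_real d, - of_real t, 1:] = [:0,1:] * [:0,1:] * [:- complex_of_real r1, 1:] * [:- complex_of_real r2, 1:]"
  proof -
    have "poly [:0, 0, of_real d, - of_real t, 1:] x = poly ([:0,1:] * [:0,1:] * [:- complex_of_real r1, 1:] * [:- complex_of_real r2, 1:]) x" for x :: complex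
      unfolding sum[symmetric] prod[symmetric] by (simp add: algebra_simps)
    then show ?thesis using poly_eq_poly_eq_iff by blast
  qed
  have pr4: "proots ([:0,1:] * [:0,1:] * [:- a, 1:] * [:- b, 1:]) = {#0,0,a,b#}" for a b :: complex
  proof -
    have n1: "[:0,1:] \<noteq> (0::complex poly)" "[:- a,1:] \<noteq> 0" "[:- b,1:] \<noteq> 0" by simp_all
    have n2: "[:0,1:] * [:0,1:] \<noteq> (0::complex poly)" by (simp only: mult_eq_0_iff n1 de_Morgan_disj simp_thms)
    have n3: "[:0,1:] * [:0,1:] * [:- a,1:] \<noteq> (0::complex poly)" by (simp only: mult_eq_0_iff n1 de_Morgan_disj simp_thms)
    show ?thesis
      by (simp only: proots_mult n1 n2 n3 proots_linear_factor minus_minus simp_thms) (simp add: add_mset_commute)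
  qed
  have PR: "proots (char_poly (wootters_R (rho2 f))) = {#0, 0, of_real r1, of_real r2#}"
    unfolding char_poly_wR d_def[symmetric] t_def[symmetric] P
    by (rule pr4)
  have L: "wootters_lambdas (rho2 f) = [sqrt r1, sqrt r2, 0, 0]"
  proof -
    have "image_mset (\<lambda>\<mu>. sqrt (Re \<mu>)) {#0, 0, complex_of_real r1, complex_of_real r2#} = mset [0, 0, sqrt r2, sqrt r1]"
      by (simp add: add_mset_commute)
    moreover have "sorted [0, 0, sqrt r2, sqrt r1]" using r2 r12 by simp
    ultimately show ?thesis unfolding wootters_lambdas_def PR
      by (simp add: sorted_sort_id)
  qed
  have C: "concurrence (rho2 f) = sqrt r1 - sqrt r2"
    unfolding concurrence_def L using r12 by simp
  have "(sqrt r1 - sqrt r2)^2 = r1 + r2 - 2 * sqrt (r1 * r2)"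
    using r2 r12 by (simp add: power2_diff real_sqrt_mult)
  also have "\<dots> = t - 2 * cmod (DD f)" unfolding sum prod d_def by simp
  finally show ?thesis unfolding C t_def .
qed

lemma pauli_ent: "pauli k $$ (i,j) = (if i < 2 \<and> j < 2 then
     (if k = 1 then (if i \<noteq> j then 1 else 0)
     else if k = 2 then (if i = 0 \<and> j = 1 then - \<i> else if i = 1 \<and> j = 0 then \<i> else 0)
     else if k = 3 then (if i = j then (if i = 0 then 1 else -1) else 0)
     else (if i = j then 1 else 0)) else pauli k $$ (i,j))"
  by (simp add: pauli_def)

lemma tcorr_explicit: assumes M: "M \<in> carrier_mat 4 4"
  shows "tcorr M k l = (\<Sum>i<4. \<Sum>j<4. M$$(i,j) * (pauli k $$ (j div 2, i div 2) * pauli l $$ (j mod 2, i mod 2)))"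
proof -
  have "tcorr M k l = (\<Sum>i<4. (M * kron (pauli k) (pauli l)) $$ (i,i))"
    using M by (simp add: tcorr_def mtrace_def)
  also have "\<dots> = (\<Sum>i<4. \<Sum>j<4. M$$(i,j) * (pauli k $$ (j div 2, i div 2) * pauli l $$ (j mod 2, i mod 2)))"
    using M by (simp add: kron_def pauli_def scalar_prod_def atLeast0LessThan)
  finally show ?thesis .
qed

lemma t11: "M \<in> carrier_mat 4 4 \<Longrightarrow> tcorr M 1 1 = M$$(0,3) + M$$(1,2) + M$$(2,1) + M$$(3,0)"
  by (simp only: tcorr_explicit sum4) (simp add: pauli_ent)

lemma t12: "M \<in> carrier_mat 4 4 \<Longrightarrow> tcorr M 1 2 = \<i> * M$$(0,3) - \<i> * M$$(1,2) + \<i> * M$$(2,1) - \<i> * M$$(3,0)"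
  by (simp only: tcorr_explicit sum4) (simp add: pauli_ent)

lemma t13: "M \<in> carrier_mat 4 4 \<Longrightarrow> tcorr M 1 3 = M$$(0,2) - M$$(1,3) + M$$(2,0) - M$$(3,1)"
  by (simp only: tcorr_explicit sum4) (simp add: pauli_ent)

lemma t21: "M \<in> carrier_mat 4 4 \<Longrightarrow> tcorr M 2 1 = \<i> * M$$(0,3) + \<i> * M$$(1,2) - \<i> * M$$(2,1) - \<i> * M$$(3,0)"
  by (simp only: tcorr_explicit sum4) (simp add: pauli_ent)

lemma t22: "M \<in> carrier_mat 4 4 \<Longrightarrow> tcorr M 2 2 = - M$$(0,3) + M$$(1,2) + M$$(2,1) - M$$(3,0)"
  by (simp only: tcorr_explicit sum4) (simp add: pauli_ent)

lemma t23: "M \<in> carrier_mat 4 4 \<Longrightarrow> tcorr M 2 3 = \<i> * M$$(0,2) - \<i> * M$$(1,3) - \<i> * M$$(2,0) + \<i> * M$$(3,1)"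
  by (simp only: tcorr_explicit sum4) (simp add: pauli_ent)

lemma t31: "M \<in> carrier_mat 4 4 \<Longrightarrow> tcorr M 3 1 = M$$(0,1) + M$$(1,0) - M$$(2,3) - M$$(3,2)"
  by (simp only: tcorr_explicit sum4) (simp add: pauli_ent)

lemma t32: "M \<in> carrier_mat 4 4 \<Longrightarrow> tcorr M 3 2 = \<i> * M$$(0,1) - \<i> * M$$(1,0) - \<i> * M$$(2,3) + \<i> * M$$(3,2)"
  by (simp only: tcorr_explicit sum4) (simp add: pauli_ent)

lemma t33: "M \<in> carrier_mat 4 4 \<Longrightarrow> tcorr M 3 3 = M$$(0,0) - M$$(1,1) - M$$(2,2) + M$$(3,3)"
  by (simp only: tcorr_explicit sum4) (simp add: pauli_ent)


definition P2f :: "(nat \<Rightarrow> nat \<Rightarrow> complex) \<Rightarrow> real" where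
  "P2f g = (cmod (g 0 0))^2 + (cmod (g 0 1))^2 + (cmod (g 1 0))^2 + (cmod (g 1 1))^2"
definition P4 :: "complex mat \<Rightarrow> real" where
  "P4 M = (\<Sum>i<4. \<Sum>j<4. (cmod (M$$(i,j)))^2)"
definition pt2 :: "complex mat \<Rightarrow> nat \<Rightarrow> nat \<Rightarrow> complex" where
  "pt2 M a a' = M$$(2*a,2*a') + M$$(2*a+1,2*a'+1)"
definition pt1 :: "complex mat \<Rightarrow> nat \<Rightarrow> nat \<Rightarrow> complex" where
  "pt1 M b b' = M$$(b,b') + M$$(b+2,b'+2)"

lemma cmod_sq: "(cmod z)^2 = (Re z)^2 + (Im z)^2"
  by (simp add: cmod_power2)

lemma S9: "Scorr M = (Re (tcorr M 1 1))^2 + (Re (tcorr M 1 2))^2 + (Re (tcorr M 1 3))^2 + (Re (tcorr M 2 1))^2 + (Re (tcorr M 2 2))^2 + (Re (tcorr M 2 3))^2 + (Re (tcorr M 3 1))^2 + (Re (tcorr M 3 2))^2 + (Re (tcorr M 3 3))^2"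
proof -
  have e: "{1..3::nat} = {1,2,3}" by auto
  show ?thesis unfolding Scorr_def e by (simp add: algebra_simps)
qed

lemma G1: assumes M: "M \<in> carrier_mat 4 4"
  and herm: "\<And>i j. i < 4 \<Longrightarrow> j < 4 \<Longrightarrow> M$$(j,i) = cnj (M$$(i,j))"
  shows "Scorr M = 4 * P4 M + (Re (M$$(0,0) + M$$(1,1) + M$$(2,2) + M$$(3,3)))^2 - 2 * P2f (pt2 M) - 2 * P2f (pt1 M)"
proof -
  have h: "M$$(1,0) = cnj (M$$(0,1))" "M$$(2,0) = cnj (M$$(0,2))" "M$$(3,0) = cnj (M$$(0,3))"
     "M$$(2,1) = cnj (M$$(1,2))" "M$$(3,1) = cnj (M$$(1,3))" "M$$(3,2) = cnj (M$$(2,3))"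
    by (rule herm; simp)+
  have d: "Im (M$$(i,i)) = 0" if "i < 4" for i
    using herm[OF that that] by (metis cnj.simps(2) neg_equal_zero)
  have d0: "Im (M$$(0,0)) = 0" "Im (M$$(1,1)) = 0" "Im (M$$(2,2)) = 0" "Im (M$$(3,3)) = 0"
    using d by auto
  have p: "pt2 M 0 0 = M$$(0,0) + M$$(1,1)" "pt2 M 0 1 = M$$(0,2) + M$$(1,3)"
     "pt2 M 1 0 = M$$(2,0) + M$$(3,1)" "pt2 M 1 1 = M$$(2,2) + M$$(3,3)"
     "pt1 M 0 0 = M$$(0,0) + M$$(2,2)" "pt1 M 0 1 = M$$(0,1) + M$$(2,3)"
     "pt1 M 1 0 = M$$(1,0) + M$$(3,2)" "pt1 M 1 1 = M$$(1,1) + M$$(3,3)"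
    by (simp_all add: pt1_def pt2_def eval_nat_numeral)
  show ?thesis
    unfolding S9 P4_def P2f_def p sum4 t11[OF M] t12[OF M] t13[OF M] t21[OF M] t22[OF M] t23[OF M] t31[OF M] t32[OF M] t33[OF M] h
    unfolding cmod_sq
    by (simp add: d0 power2_eq_square algebra_simps)
qed

definition fAB :: "complex vec \<Rightarrow> nat \<Rightarrow> nat \<Rightarrow> complex" where
  "fAB \<psi> c i = \<psi> $ (2*i+c)"
definition fAC :: "complex vec \<Rightarrow> nat \<Rightarrow> nat \<Rightarrow> complex" where
  "fAC \<psi> b i = \<psi> $ (4*(i div 2) + 2*b + i mod 2)"
definition fBC :: "complex vec \<Rightarrow> nat \<Rightarrow> nat \<Rightarrow> complex" where
  "fBC \<psi> a i = \<psi> $ (4*a+i)"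
definition rA :: "complex vec \<Rightarrow> nat \<Rightarrow> nat \<Rightarrow> complex" where
  "rA \<psi> a a' = (\<Sum>m<4. \<psi> $ (4*a+m) * cnj (\<psi> $ (4*a'+m)))"
definition rB :: "complex vec \<Rightarrow> nat \<Rightarrow> nat \<Rightarrow> complex" where
  "rB \<psi> b b' = (\<Sum>a<2. \<Sum>c<2. \<psi> $ (4*a+2*b+c) * cnj (\<psi> $ (4*a+2*b'+c)))"
definition rC :: "complex vec \<Rightarrow> nat \<Rightarrow> nat \<Rightarrow> complex" where
  "rC \<psi> c c' = (\<Sum>a<2. \<Sum>b<2. \<psi> $ (4*a+2*b+c) * cnj (\<psi> $ (4*a+2*b+c')))"
definition NN :: "complex vec \<Rightarrow> real" where
  "NN \<psi> = (\<Sum>i<8. (cmod (\<psi> $ i))^2)"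

lemma sum8: "(\<Sum>j<8. f j) = f 0 + f (1::nat) + f 2 + f 3 + f 4 + f 5 + f 6 + f 7" by (simp add: eval_nat_numeral)

lemma JA: "tt (fAB \<psi>) + tt (fAC \<psi>) = 2 * (NN \<psi>)^2 - 2 * P2f (rA \<psi>)"
  apply (rule of_real_eq_iff[where 'a=complex, THEN iffD1])
  unfolding tt_def P2f_def NN_def
  apply (simp only: of_real_add of_real_mult of_real_diff of_real_numeral of_real_sum cnorm2)
  apply (simp only: of_real_power)
  apply (simp only: of_real_sum cnorm2)
  apply (simp add: sum8 sum4 sum2 rA_def TT_def fAB_def fAC_def)
  apply (simp add: numeral_eq_Suc algebra_simps)
  done

lemma JB: "tt (fAB \<psi>) + tt (fBC \<psi>) = 2 * (NN \<psi>)^2 - 2 * P2f (rB \<psi>)"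
  apply (rule of_real_eq_iff[where 'a=complex, THEN iffD1])
  unfolding tt_def P2f_def NN_def
  apply (simp only: of_real_add of_real_mult of_real_diff of_real_numeral of_real_sum cnorm2)
  apply (simp only: of_real_power)
  apply (simp only: of_real_sum cnorm2)
  apply (simp add: sum8 sum4 sum2 rB_def TT_def fAB_def fBC_def)
  apply (simp add: numeral_eq_Suc algebra_simps)
  done

lemma JC: "tt (fAC \<psi>) + tt (fBC \<psi>) = 2 * (NN \<psi>)^2 - 2 * P2f (rC \<psi>)"
  apply (rule of_real_eq_iff[where 'a=complex, THEN iffD1])
  unfolding tt_def P2f_def NN_def
  apply (simp only: of_real_add of_real_mult of_real_diff of_real_numeral of_real_sum cnorm2)
  apply (simp only: of_real_power)
  apply (simp only: of_real_sum cnorm2)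
  apply (simp add: sum8 sum4 sum2 rC_def TT_def fAC_def fBC_def)
  apply (simp add: numeral_eq_Suc algebra_simps)
  done

lemma DAB: "DD (fAB \<psi>) = DD (fBC \<psi>)"
  unfolding DD_def TT_def fAB_def fBC_def by (simp add: numeral_eq_Suc algebra_simps)

lemma DAC: "DD (fAC \<psi>) = DD (fBC \<psi>)"
  unfolding DD_def TT_def fAC_def fBC_def
  apply simp
  apply (simp add: numeral_eq_Suc algebra_simps)
  done

lemma P4AB: "P4 (rho2 (fAB \<psi>)) = P2f (rC \<psi>)"
  apply (rule of_real_eq_iff[where 'a=complex, THEN iffD1])
  unfolding P4_def P2f_def
  apply (simp only: of_real_add of_real_mult of_real_diff of_real_numeral of_real_sum cnorm2)
  apply (simp add: sum4 sum2 rho2_def rC_def fAB_def)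
  apply (simp add: numeral_eq_Suc algebra_simps)
  done

lemma P4AC: "P4 (rho2 (fAC \<psi>)) = P2f (rB \<psi>)"
  apply (rule of_real_eq_iff[where 'a=complex, THEN iffD1])
  unfolding P4_def P2f_def
  apply (simp only: of_real_add of_real_mult of_real_diff of_real_numeral of_real_sum cnorm2)
  apply (simp add: sum4 sum2 rho2_def rB_def fAC_def)
  apply (simp add: numeral_eq_Suc algebra_simps)
  done

lemma P4BC: "P4 (rho2 (fBC \<psi>)) = P2f (rA \<psi>)"
  apply (rule of_real_eq_iff[where 'a=complex, THEN iffD1])
  unfolding P4_def P2f_def
  apply (simp only: of_real_add of_real_mult of_real_diff of_real_numeral of_real_sum cnorm2)
  apply (simp add: sum4 sum2 rho2_def rA_def fBC_def)
  apply (simp add: numeral_eq_Suc algebra_simps)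
  done

lemma proj_ent: "\<psi> \<in> carrier_vec 8 \<Longrightarrow> i < 8 \<Longrightarrow> j < 8 \<Longrightarrow> proj \<psi> $$ (i,j) = \<psi> $ i * cnj (\<psi> $ j)"
  by (simp add: proj_def)

lemma less4: "(i::nat) < 4 \<longleftrightarrow> i = 0 \<or> i = 1 \<or> i = 2 \<or> i = 3" by auto

lemma redAB: assumes "\<psi> \<in> carrier_vec 8" shows "red_AB (proj \<psi>) = rho2 (fAB \<psi>)"
  apply (rule eq_matI)
  using assms by (auto simp: red_AB_def rho2_def fAB_def proj_ent sum2)

lemma redAC: assumes "\<psi> \<in> carrier_vec 8" shows "red_AC (proj \<psi>) = rho2 (fAC \<psi>)"
  apply (rule eq_matI)
  using assms by (auto simp: red_AC_def rho2_def fAC_def proj_ent sum2 less4)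

lemma redBC: assumes "\<psi> \<in> carrier_vec 8" shows "red_BC (proj \<psi>) = rho2 (fBC \<psi>)"
  apply (rule eq_matI)
  using assms by (auto simp: red_BC_def rho2_def fBC_def proj_ent sum2)

lemma redA: assumes "\<psi> \<in> carrier_vec 8" "a < 2" "b < 2" shows "red_A (proj \<psi>) $$ (a,b) = rA \<psi> a b"
  using assms by (auto simp: red_A_def rA_def proj_ent)

lemma rho2_carrier: "rho2 f \<in> carrier_mat 4 4" by (simp add: rho2_def)

lemma rho2_herm: "i < 4 \<Longrightarrow> j < 4 \<Longrightarrow> rho2 f $$ (j,i) = cnj (rho2 f $$ (i,j))"
  by (simp add: rho2_def)

lemma S_rho2: "Scorr (rho2 f) = 4 * P4 (rho2 f) + (Re (rho2 f $$ (0,0) + rho2 f $$ (1,1) + rho2 f $$ (2,2) + rho2 f $$ (3,3)))^2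
   - 2 * P2f (pt2 (rho2 f)) - 2 * P2f (pt1 (rho2 f))"
  by (rule G1[OF rho2_carrier rho2_herm])

lemma P2f_cong: "(\<And>a b. a < 2 \<Longrightarrow> b < 2 \<Longrightarrow> g a b = h a b) \<Longrightarrow> P2f g = P2f h"
  unfolding P2f_def by simp

lemma less2: "(a::nat) < 2 \<longleftrightarrow> a = 0 \<or> a = 1" by auto

lemma pt2_AB: "P2f (pt2 (rho2 (fAB \<psi>))) = P2f (rA \<psi>)"
  by (rule P2f_cong, auto simp: less2 pt2_def rho2_def fAB_def rA_def sum2 sum4, (simp_all add: numeral_eq_Suc algebra_simps)?)

lemma pt1_AB: "P2f (pt1 (rho2 (fAB \<psi>))) = P2f (rB \<psi>)"
  by (rule P2f_cong, auto simp: less2 pt1_def rho2_def fAB_def rB_def sum2 sum4, (simp_all add: numeral_eq_Suc algebra_simps)?)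

lemma pt2_AC: "P2f (pt2 (rho2 (fAC \<psi>))) = P2f (rA \<psi>)"
  by (rule P2f_cong, auto simp: less2 pt2_def rho2_def fAC_def rA_def sum2 sum4, (simp_all add: numeral_eq_Suc algebra_simps)?)

lemma pt1_AC: "P2f (pt1 (rho2 (fAC \<psi>))) = P2f (rC \<psi>)"
  by (rule P2f_cong, auto simp: less2 pt1_def rho2_def fAC_def rC_def sum2 sum4, (simp_all add: numeral_eq_Suc algebra_simps)?)

lemma pt2_BC: "P2f (pt2 (rho2 (fBC \<psi>))) = P2f (rB \<psi>)"
  by (rule P2f_cong, auto simp: less2 pt2_def rho2_def fBC_def rB_def sum2 sum4, (simp_all add: numeral_eq_Suc algebra_simps)?)

lemma pt1_BC: "P2f (pt1 (rho2 (fBC \<psi>))) = P2f (rC \<psi>)"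
  by (rule P2f_cong, auto simp: less2 pt1_def rho2_def fBC_def rC_def sum2 sum4, (simp_all add: numeral_eq_Suc algebra_simps)?)

lemma tr_AB: "Re (rho2 (fAB \<psi>) $$ (0,0) + rho2 (fAB \<psi>) $$ (1,1) + rho2 (fAB \<psi>) $$ (2,2) + rho2 (fAB \<psi>) $$ (3,3)) = NN \<psi>"
proof -
  have "rho2 (fAB \<psi>) $$ (0,0) + rho2 (fAB \<psi>) $$ (1,1) + rho2 (fAB \<psi>) $$ (2,2) + rho2 (fAB \<psi>) $$ (3,3) = complex_of_real (NN \<psi>)"
    unfolding NN_def
    apply (simp only: of_real_sum cnorm2)
    apply (simp add: sum8 rho2_def fAB_def)
    apply ((simp add: numeral_eq_Suc algebra_simps)?)
    done
  then show ?thesis by simp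
qed

lemma tr_AC: "Re (rho2 (fAC \<psi>) $$ (0,0) + rho2 (fAC \<psi>) $$ (1,1) + rho2 (fAC \<psi>) $$ (2,2) + rho2 (fAC \<psi>) $$ (3,3)) = NN \<psi>"
proof -
  have "rho2 (fAC \<psi>) $$ (0,0) + rho2 (fAC \<psi>) $$ (1,1) + rho2 (fAC \<psi>) $$ (2,2) + rho2 (fAC \<psi>) $$ (3,3) = complex_of_real (NN \<psi>)"
    unfolding NN_def
    apply (simp only: of_real_sum cnorm2)
    apply (simp add: sum8 rho2_def fAC_def)
    apply ((simp add: numeral_eq_Suc algebra_simps)?)
    done
  then show ?thesis by simp
qed

lemma tr_BC: "Re (rho2 (fBC \<psi>) $$ (0,0) + rho2 (fBC \<psi>) $$ (1,1) + rho2 (fBC \<psi>) $$ (2,2) + rho2 (fBC \<psi>) $$ (3,3)) = NN \<psi>"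
proof -
  have "rho2 (fBC \<psi>) $$ (0,0) + rho2 (fBC \<psi>) $$ (1,1) + rho2 (fBC \<psi>) $$ (2,2) + rho2 (fBC \<psi>) $$ (3,3) = complex_of_real (NN \<psi>)"
    unfolding NN_def
    apply (simp only: of_real_sum cnorm2)
    apply (simp add: sum8 rho2_def fBC_def)
    apply ((simp add: numeral_eq_Suc algebra_simps)?)
    done
  then show ?thesis by simp
qed

lemma tr_rA: "Re (rA \<psi> 0 0 + rA \<psi> 1 1) = NN \<psi>"
proof -
  have "rA \<psi> 0 0 + rA \<psi> 1 1 = complex_of_real (NN \<psi>)"
    unfolding NN_def
    apply (simp only: of_real_sum cnorm2)
    apply (simp add: sum8 sum4 sum2 rA_def)
    apply ((simp add: numeral_eq_Suc algebra_simps)?)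
    done
  then show ?thesis by simp
qed

lemma tr_rB: "Re (rB \<psi> 0 0 + rB \<psi> 1 1) = NN \<psi>"
proof -
  have "rB \<psi> 0 0 + rB \<psi> 1 1 = complex_of_real (NN \<psi>)"
    unfolding NN_def
    apply (simp only: of_real_sum cnorm2)
    apply (simp add: sum8 sum4 sum2 rB_def)
    apply ((simp add: numeral_eq_Suc algebra_simps)?)
    done
  then show ?thesis by simp
qed

lemma tr_rC: "Re (rC \<psi> 0 0 + rC \<psi> 1 1) = NN \<psi>"
proof -
  have "rC \<psi> 0 0 + rC \<psi> 1 1 = complex_of_real (NN \<psi>)"
    unfolding NN_def
    apply (simp only: of_real_sum cnorm2)
    apply (simp add: sum8 sum4 sum2 rC_def)
    apply ((simp add: numeral_eq_Suc algebra_simps)?)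
    done
  then show ?thesis by simp
qed

lemma P2f_lb: "(Re (g 0 0 + g 1 1))^2 \<le> 2 * P2f g"
proof -
  have a: "(Re (g 0 0))^2 \<le> (cmod (g 0 0))^2" "(Re (g 1 1))^2 \<le> (cmod (g 1 1))^2"
    by (simp_all add: cmod_power2)
  have b: "(Re (g 0 0) + Re (g 1 1))^2 \<le> 2 * ((Re (g 0 0))^2 + (Re (g 1 1))^2)"
    by (smt (verit) sum_squares_bound power2_sum)
  have c: "0 \<le> (cmod (g 0 1))^2" "0 \<le> (cmod (g 1 0))^2" by simp_all
  have "(Re (g 0 0 + g 1 1))^2 \<le> 2 * ((Re (g 0 0))^2 + (Re (g 1 1))^2)" using b by simp
  also have "\<dots> \<le> 2 * P2f g" unfolding P2f_def using a c by (smt (verit))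
  finally show ?thesis .
qed

lemma pauli_tr: assumes R: "R \<in> carrier_mat 2 2"
  shows "mtrace (R * pauli k) = (\<Sum>i<2. \<Sum>j<2. R$$(i,j) * pauli k $$ (j,i))"
  using R by (simp add: mtrace_def pauli_def scalar_prod_def atLeast0LessThan)

lemma G2: assumes R: "R \<in> carrier_mat 2 2"
  and h: "R$$(1,0) = cnj (R$$(0,1))" and d: "Im (R$$(0,0)) = 0" "Im (R$$(1,1)) = 0"
  shows "(\<Sum>k\<in>{1..3}. (Re (mtrace (R * pauli k)))^2) = 2 * P2f (\<lambda>a b. R$$(a,b)) - (Re (R$$(0,0) + R$$(1,1)))^2"
proof -
  have e: "{1..3::nat} = {1,2,3}" by auto
  have t: "mtrace (R * pauli 1) = R$$(0,1) + R$$(1,0)"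
          "mtrace (R * pauli 2) = \<i> * R$$(0,1) - \<i> * R$$(1,0)"
          "mtrace (R * pauli 3) = R$$(0,0) - R$$(1,1)"
    unfolding pauli_tr[OF R] by (simp_all add: sum2 pauli_ent)
  have "(\<Sum>k\<in>{1..3}. (Re (mtrace (R * pauli k)))^2) = (Re (mtrace (R * pauli 1)))^2 + (Re (mtrace (R * pauli 2)))^2 + (Re (mtrace (R * pauli 3)))^2"
    unfolding e by (simp add: algebra_simps)
  also have "\<dots> = 2 * P2f (\<lambda>a b. R$$(a,b)) - (Re (R$$(0,0) + R$$(1,1)))^2"
    unfolding t P2f_def h cmod_sq using d by (simp add: power2_eq_square algebra_simps)
  finally show ?thesis .
qed

lemma blochA: assumes \<psi>: "\<psi> \<in> carrier_vec 8"
  shows "(\<Sum>k\<in>{1..3}. (bloch_A (proj \<psi>) k)^2) = 2 * P2f (rA \<psi>) - (NN \<psi>)^2"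
proof -
  let ?R = "red_A (proj \<psi>)"
  have R: "?R \<in> carrier_mat 2 2" by (simp add: red_A_def)
  have e: "?R $$ (0,0) = rA \<psi> 0 0" "?R $$ (0,1) = rA \<psi> 0 1" "?R $$ (1,0) = rA \<psi> 1 0" "?R $$ (1,1) = rA \<psi> 1 1"
    using redA[OF \<psi>] by auto
  have h: "rA \<psi> 1 0 = cnj (rA \<psi> 0 1)" by (simp add: rA_def cnj_sum mult.commute)
  have d: "Im (rA \<psi> 0 0) = 0" "Im (rA \<psi> 1 1) = 0"
    by (simp_all add: rA_def Im_sum)
  have "(\<Sum>k\<in>{1..3}. (bloch_A (proj \<psi>) k)^2) = 2 * P2f (\<lambda>a b. ?R$$(a,b)) - (Re (?R$$(0,0) + ?R$$(1,1)))^2"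
    unfolding bloch_A_def by (rule G2[OF R]) (simp_all only: e h d)
  also have "P2f (\<lambda>a b. ?R$$(a,b)) = P2f (rA \<psi>)" by (rule P2f_cong) (simp add: redA[OF \<psi>])
  also have "Re (?R$$(0,0) + ?R$$(1,1)) = NN \<psi>" unfolding e by (rule tr_rA)
  finally show ?thesis .
qed

lemma pure_bounds: assumes u: "unit_vec8 \<psi>"
  shows "0 \<le> tau_pure \<psi>"
    "Scorr (red_AB (proj \<psi>)) + 2 * tau_pure \<psi> \<le> 3"
    "Scorr (red_AC (proj \<psi>)) + 2 * tau_pure \<psi> \<le> 3"
    "Scorr (red_BC (proj \<psi>)) + 2 * tau_pure \<psi> \<le> 3"
proof -
  have c: "\<psi> \<in> carrier_vec 8" using u unfolding unit_vec8_def by simp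
  have N: "NN \<psi> = 1" using u unfolding unit_vec8_def NN_def by simp
  define D where "D = cmod (DD (fBC \<psi>))"
  have dAB: "cmod (DD (fAB \<psi>)) = D" unfolding D_def DAB ..
  have dAC: "cmod (DD (fAC \<psi>)) = D" unfolding D_def DAC ..
  have g1: "2 * D \<le> tt (fAB \<psi>)" using tt_ge[of "fAB \<psi>"] dAB by simp
  have g2: "2 * D \<le> tt (fAC \<psi>)" using tt_ge[of "fAC \<psi>"] dAC by simp
  have g3: "2 * D \<le> tt (fBC \<psi>)" using tt_ge[of "fBC \<psi>"] unfolding D_def by simp
  have ja: "tt (fAB \<psi>) + tt (fAC \<psi>) = 2 - 2 * P2f (rA \<psi>)" using JA[of \<psi>] N by simp
  have jb: "tt (fAB \<psi>) + tt (fBC \<psi>) = 2 - 2 * P2f (rB \<psi>)" using JB[of \<psi>] N by simp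
  have jc: "tt (fAC \<psi>) + tt (fBC \<psi>) = 2 - 2 * P2f (rC \<psi>)" using JC[of \<psi>] N by simp
  have la: "1 \<le> 2 * P2f (rA \<psi>)" using P2f_lb[of "rA \<psi>"] tr_rA[of \<psi>] N by simp
  have lb: "1 \<le> 2 * P2f (rB \<psi>)" using P2f_lb[of "rB \<psi>"] tr_rB[of \<psi>] N by simp
  have lc: "1 \<le> 2 * P2f (rC \<psi>)" using P2f_lb[of "rC \<psi>"] tr_rC[of \<psi>] N by simp
  have tau: "tau_pure \<psi> = 1 - (2 * P2f (rA \<psi>) - 1) - (tt (fAB \<psi>) - 2 * D) - (tt (fAC \<psi>) - 2 * D)"
    unfolding tau_pure_def blochA[OF c] N redAB[OF c] redAC[OF c] conc_rho2 dAB dAC by simp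
  have sAB: "Scorr (red_AB (proj \<psi>)) = 4 * P2f (rC \<psi>) + 1 - 2 * P2f (rA \<psi>) - 2 * P2f (rB \<psi>)"
    unfolding redAB[OF c] S_rho2 P4AB tr_AB pt2_AB pt1_AB N by simp
  have sAC: "Scorr (red_AC (proj \<psi>)) = 4 * P2f (rB \<psi>) + 1 - 2 * P2f (rA \<psi>) - 2 * P2f (rC \<psi>)"
    unfolding redAC[OF c] S_rho2 P4AC tr_AC pt2_AC pt1_AC N by simp
  have sBC: "Scorr (red_BC (proj \<psi>)) = 4 * P2f (rA \<psi>) + 1 - 2 * P2f (rB \<psi>) - 2 * P2f (rC \<psi>)"
    unfolding redBC[OF c] S_rho2 P4BC tr_BC pt2_BC pt1_BC N by simp
  show "0 \<le> tau_pure \<psi>" using tau ja D_def by simp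
  have t4: "tau_pure \<psi> = 4 * D" using tau ja by simp
  have h8: "8 * D \<le> 4 - 4 * P2f (rC \<psi>)" using g2 g3 jc by linarith
  show "Scorr (red_AB (proj \<psi>)) + 2 * tau_pure \<psi> \<le> 3"
    unfolding sAB t4 using h8 la lb by linarith
  have h8b: "8 * D \<le> 4 - 4 * P2f (rB \<psi>)" using g1 g3 jb by linarith
  show "Scorr (red_AC (proj \<psi>)) + 2 * tau_pure \<psi> \<le> 3"
    unfolding sAC t4 using h8b la lc by linarith
  have h8a: "8 * D \<le> 4 - 4 * P2f (rA \<psi>)" using g1 g2 ja by linarith
  show "Scorr (red_BC (proj \<psi>)) + 2 * tau_pure \<psi> \<le> 3"
    unfolding sBC t4 using h8a lb lc by linarith
qed

definition Qf :: "nat \<Rightarrow> (nat \<Rightarrow> nat \<Rightarrow> complex) \<Rightarrow> (nat \<Rightarrow> complex) \<Rightarrow> complex" where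
  "Qf n A x = (\<Sum>i<n. \<Sum>j<n. cnj (x i) * A i j * x j)"

lemma sum_delta_r: "(m::nat) < n \<Longrightarrow> (\<Sum>j<n. c j * (if j = m then \<alpha> else 0)) = c m * (\<alpha>::complex)"
proof -
  assume m: "m < n"
  have "(\<Sum>j<n. c j * (if j = m then \<alpha> else 0)) = (\<Sum>j<n. if j = m then c j * \<alpha> else 0)"
    by (rule sum.cong) auto
  also have "\<dots> = c m * \<alpha>" using m by (simp add: sum.delta[OF finite_lessThan])
  finally show ?thesis .
qed

lemma sum_delta_l: "(m::nat) < n \<Longrightarrow> (\<Sum>j<n. (if j = m then \<alpha> else 0) * c j) = (\<alpha>::complex) * c m"
  using sum_delta_r[of m n c \<alpha>] by (simp add: mult.commute)

lemma Q_shift: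
  assumes m: "m < n"
  shows "Qf n A (\<lambda>i. x i - (if i = m then \<alpha> else 0)) =
     Qf n A x - cnj \<alpha> * (\<Sum>j<n. A m j * x j) - (\<Sum>i<n. cnj (x i) * A i m) * \<alpha> + cnj \<alpha> * A m m * \<alpha>"
proof -
  let ?d = "\<lambda>i. (if i = m then \<alpha> else 0)"
  have e: "cnj (x i - ?d i) * A i j * (x j - ?d j) =
     cnj (x i) * A i j * x j - cnj (x i) * A i j * ?d j - cnj (?d i) * (A i j * x j) + cnj (?d i) * (A i j * ?d j)" for i j
    by (simp add: algebra_simps)
  have cd: "cnj (?d i) = (if i = m then cnj \<alpha> else 0)" for i by simp
  have "(\<Sum>j<n. cnj (x i) * A i j * ?d j) = cnj (x i) * A i m * \<alpha>" for i
    using sum_delta_r[OF m, of "\<lambda>j. cnj (x i) * A i j"] by simp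
  then have s1: "(\<Sum>i<n. \<Sum>j<n. cnj (x i) * A i j * ?d j) = (\<Sum>i<n. cnj (x i) * A i m) * \<alpha>"
    by (simp add: sum_distrib_right)
  have "(\<Sum>j<n. cnj (?d i) * (A i j * x j)) = cnj (?d i) * (\<Sum>j<n. A i j * x j)" for i
    by (simp add: sum_distrib_left)
  then have s2: "(\<Sum>i<n. \<Sum>j<n. cnj (?d i) * (A i j * x j)) = cnj \<alpha> * (\<Sum>j<n. A m j * x j)"
    using sum_delta_l[OF m, of "cnj \<alpha>" "\<lambda>i. \<Sum>j<n. A i j * x j"] unfolding cd by simp
  have "(\<Sum>j<n. cnj (?d i) * (A i j * ?d j)) = cnj (?d i) * (A i m * \<alpha>)" for i
    using sum_delta_r[OF m, of "\<lambda>j. cnj (?d i) * A i j" \<alpha>] by (simp add: mult.assoc)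
  then have s3: "(\<Sum>i<n. \<Sum>j<n. cnj (?d i) * (A i j * ?d j)) = cnj \<alpha> * A m m * \<alpha>"
    using sum_delta_l[OF m, of "cnj \<alpha>" "\<lambda>i. A i m * \<alpha>"] unfolding cd by (simp add: mult.assoc)
  show ?thesis
    unfolding Qf_def e sum_subtractf sum.distrib s1 s2 s3 by simp
qed

definition hermf :: "nat \<Rightarrow> (nat \<Rightarrow> nat \<Rightarrow> complex) \<Rightarrow> bool" where
  "hermf n A \<longleftrightarrow> (\<forall>i<n. \<forall>j<n. A j i = cnj (A i j))"
definition psdf :: "nat \<Rightarrow> (nat \<Rightarrow> nat \<Rightarrow> complex) \<Rightarrow> bool" where
  "psdf n A \<longleftrightarrow> (\<forall>x. 0 \<le> Re (Qf n A x))"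
definition zerof :: "nat \<Rightarrow> nat \<Rightarrow> (nat \<Rightarrow> nat \<Rightarrow> complex) \<Rightarrow> bool" where
  "zerof n m A \<longleftrightarrow> (\<forall>i<n. \<forall>j<n. (i < m \<or> j < m) \<longrightarrow> A i j = 0)"

lemma Q_zero: "Qf n A (\<lambda>i. 0) = 0" by (simp add: Qf_def)

lemma Q_one: assumes q: "q < n" shows "Qf n A (\<lambda>i. if i = q then \<gamma> else 0) = cnj \<gamma> * A q q * \<gamma>"
proof -
  have e: "(\<lambda>i. if i = q then \<gamma> else 0) = (\<lambda>i. (0::complex) - (if i = q then - \<gamma> else 0))"
    by auto
  show ?thesis unfolding e Q_shift[OF q] Q_zero by simp
qed

lemma Q_sub: "Qf n (\<lambda>i j. A i j - A i m * A m j / a) x =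
   Qf n A x - (\<Sum>i<n. cnj (x i) * A i m) * (\<Sum>j<n. A m j * x j) / a"
proof -
  have e: "cnj (x i) * (A i j - A i m * A m j / a) * x j = cnj (x i) * A i j * x j - (cnj (x i) * A i m) * (A m j * x j) / a" for i j
    by (simp add: algebra_simps)
  show ?thesis unfolding Qf_def e sum_subtractf sum_product sum_divide_distrib by simp
qed

lemma herm_col: assumes h: "hermf n A" and m: "m < n"
  shows "(\<Sum>i<n. cnj (x i) * A i m) = cnj (\<Sum>j<n. A m j * x j)"
proof -
  have "(\<Sum>i<n. cnj (x i) * A i m) = (\<Sum>i<n. cnj (A m i * x i))"
  proof (rule sum.cong)
    fix i assume "i \<in> {..<n}"
    then have "A i m = cnj (A m i)" using h m unfolding hermf_def by blast
    then show "cnj (x i) * A i m = cnj (A m i * x i)" by (simp add: mult.commute)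
  qed simp
  then show ?thesis by (simp add: cnj_sum)
qed


lemma zero_row: assumes h: "hermf n A" and p: "psdf n A" and pn: "m < n" and qn: "q < n"
  and a0: "A m m = 0"
  shows "A m q = 0"
proof (rule ccontr)
  assume b0: "A m q \<noteq> 0"
  define b where "b = A m q"
  have mq: "m \<noteq> q" using b0 a0 by auto
  have hq: "A q m = cnj b" using h pn qn unfolding hermf_def b_def by blast
  have "0 \<le> Re (Qf n A (\<lambda>i. if i = q then 1 else 0))" using p unfolding psdf_def by blast
  then have rq: "0 \<le> Re (A q q)" by (simp add: Q_one[OF qn])
  define t where "t = (Re (A q q) + 1) / (2 * (cmod b)^2)"
  have bpos: "0 < (cmod b)^2" using b0 b_def by simp
  define x where "x = (\<lambda>i. if i = q then (1::complex) else 0)"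
  define \<alpha> where "\<alpha> = complex_of_real t * b"
  have s1: "(\<Sum>j<n. A m j * x j) = b"
    unfolding x_def b_def using sum_delta_r[OF qn, of "\<lambda>j. A m j" 1] by simp
  have cx: "cnj (x i) = (if i = q then 1 else 0)" for i by (simp add: x_def)
  have s2: "(\<Sum>i<n. cnj (x i) * A i m) = cnj b"
    unfolding cx using sum_delta_l[OF qn, of 1 "\<lambda>i. A i m"] hq by simp
  have Qx: "Qf n A x = A q q" unfolding x_def Q_one[OF qn] by simp
  have "0 \<le> Re (Qf n A (\<lambda>i. x i - (if i = m then \<alpha> else 0)))" using p unfolding psdf_def by blast
  also have "Qf n A (\<lambda>i. x i - (if i = m then \<alpha> else 0)) = A q q - cnj \<alpha> * b - cnj b * \<alpha>"
    unfolding Q_shift[OF pn] s1 s2 Qx a0 by simp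
  also have "Re (A q q - cnj \<alpha> * b - cnj b * \<alpha>) = Re (A q q) - 2 * t * (cmod b)^2"
    unfolding \<alpha>_def cmod_power2 by (simp add: algebra_simps power2_eq_square)
  also have "\<dots> = -1" unfolding t_def using bpos by (simp add: field_simps)
  finally show False by simp
qed

lemma chol_step:
  assumes h: "hermf n A" and p: "psdf n A" and z: "zerof n m A" and m: "m < n"
  shows "\<exists>v B. hermf n B \<and> psdf n B \<and> zerof n (Suc m) B \<and> (\<forall>i<n. \<forall>j<n. A i j = v i * cnj (v j) + B i j)"
proof -
  define a where "a = A m m"
  have hm: "A i m = cnj (A m i)" if "i < n" for i using h m that unfolding hermf_def by blast
  have ia: "Im a = 0" using hm[OF m] unfolding a_def by (metis cnj.simps(2) neg_equal_zero)
  have "0 \<le> Re (Qf n A (\<lambda>i. if i = m then 1 else 0))" using p unfolding psdf_def by blast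
  then have ra: "0 \<le> Re a" unfolding a_def by (simp add: Q_one[OF m])
  show ?thesis
  proof (cases "Re a = 0")
    case True
    then have a0: "A m m = 0" using ia unfolding a_def by (simp add: complex_eq_iff)
    have r0: "A m j = 0" if "j < n" for j using zero_row[OF h p m that a0] .
    have c0: "A i m = 0" if "i < n" for i using hm[OF that] r0[OF that] by simp
    have "zerof n (Suc m) A" unfolding zerof_def
    proof (intro allI impI)
      fix i j assume i: "i < n" and j: "j < n" and ij: "i < Suc m \<or> j < Suc m"
      show "A i j = 0"
      proof (cases "i < m \<or> j < m")
        case True then show ?thesis using z i j unfolding zerof_def by blast
      next
        case False then have "i = m \<or> j = m" using ij by auto
        then show ?thesis using r0 c0 i j by auto
      qed
    qed
    then show ?thesis using h p by (intro exI[of _ "\<lambda>i. 0"] exI[of _ A]) auto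
  next
    case False
    then have rpos: "0 < Re a" using ra by simp
    have aR: "a = complex_of_real (Re a)" using ia by (simp add: complex_eq_iff)
    define sq where "sq = complex_of_real (sqrt (Re a))"
    have "sq * cnj sq = complex_of_real (sqrt (Re a) * sqrt (Re a))" unfolding sq_def by (simp only: complex_cnj_complex_of_real of_real_mult)
    also have "\<dots> = complex_of_real (Re a)" using rpos by simp
    finally have sqsq: "sq * cnj sq = a" using aR by simp
    have a_nz: "a \<noteq> 0" using rpos by auto
    have ca: "cnj a = a" using ia by (simp add: complex_eq_iff)
    define v where "v = (\<lambda>i. A i m / sq)"
    define B where "B = (\<lambda>i j. A i j - A i m * A m j / a)"
    have dec: "\<forall>i<n. \<forall>j<n. A i j = v i * cnj (v j) + B i j"
    proof (intro allI impI)
      fix i j assume i: "i < n" and j: "j < n"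
      have "v i * cnj (v j) = A i m * cnj (A j m) / (sq * cnj sq)" unfolding v_def by simp
      also have "cnj (A j m) = A m j" using hm[OF j] by simp
      finally show "A i j = v i * cnj (v j) + B i j" unfolding B_def sqsq by simp
    qed
    have hB: "hermf n B" unfolding hermf_def
    proof (intro allI impI)
      fix i j assume i: "i < n" and j: "j < n"
      have "A j i = cnj (A i j)" using h i j unfolding hermf_def by blast
      moreover have "A j m = cnj (A m j)" "A m i = cnj (A i m)" using hm[OF j] hm[OF i] by simp_all
      ultimately show "B j i = cnj (B i j)" unfolding B_def using ca by (simp add: mult.commute)
    qed
    have pB: "psdf n B" unfolding psdf_def
    proof
      fix x
      define s where "s = (\<Sum>j<n. A m j * x j)"
      define \<alpha> where "\<alpha> = s / a"
      have col: "(\<Sum>i<n. cnj (x i) * A i m) = cnj s" unfolding s_def by (rule herm_col[OF h m])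
      have "Qf n B x = Qf n A x - cnj s * s / a" unfolding B_def Q_sub col s_def by simp
      also have "\<dots> = Qf n A (\<lambda>i. x i - (if i = m then \<alpha> else 0))"
        unfolding Q_shift[OF m] col s_def[symmetric] a_def[symmetric] \<alpha>_def using a_nz ca
        by (simp add: field_simps s_def)
      finally have "Qf n B x = Qf n A (\<lambda>i. x i - (if i = m then \<alpha> else 0))" .
      then show "0 \<le> Re (Qf n B x)" using p unfolding psdf_def by simp
    qed
    have zB: "zerof n (Suc m) B" unfolding zerof_def
    proof (intro allI impI)
      fix i j assume i: "i < n" and j: "j < n" and ij: "i < Suc m \<or> j < Suc m"
      have zz: "A k l = 0" if "k < n" "l < n" "k < m \<or> l < m" for k l using z that unfolding zerof_def by blast
      show "B i j = 0"
      proof (cases "i < m")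
        case True then show ?thesis unfolding B_def using zz[OF i j] zz[OF i m] by simp
      next
        case iF: False
        show ?thesis
        proof (cases "j < m")
          case True then show ?thesis unfolding B_def using zz[OF i j] zz[OF m j] by simp
        next
          case False
          then have "i = m \<or> j = m" using ij iF by auto
          then show ?thesis unfolding B_def using a_nz a_def by auto
        qed
      qed
    qed
    show ?thesis using hB pB zB dec by blast
  qed
qed

lemma chol_all:
  assumes "m \<le> n"
  shows "\<forall>A. hermf n A \<longrightarrow> psdf n A \<longrightarrow> zerof n m A \<longrightarrow>
     (\<exists>vs. \<forall>i<n. \<forall>j<n. A i j = (\<Sum>v\<leftarrow>vs. v i * cnj (v j)))"
  using assms
proof (induction m rule: inc_induct)
  case base
  show ?case
  proof (intro allI impI)
    fix A assume "zerof n n A"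
    then have "\<forall>i<n. \<forall>j<n. A i j = (\<Sum>v\<leftarrow>[]. v i * cnj (v j))" unfolding zerof_def by simp
    then show "\<exists>vs. \<forall>i<n. \<forall>j<n. A i j = (\<Sum>v\<leftarrow>vs. v i * cnj (v j))" by blast
  qed
next
  case (step m)
  show ?case
  proof (intro allI impI)
    fix A assume h: "hermf n A" and p: "psdf n A" and z: "zerof n m A"
    obtain v B where B: "hermf n B" "psdf n B" "zerof n (Suc m) B" and d: "\<forall>i<n. \<forall>j<n. A i j = v i * cnj (v j) + B i j"
      using chol_step[OF h p z step(2)] by blast
    obtain vs where vs: "\<forall>i<n. \<forall>j<n. B i j = (\<Sum>v\<leftarrow>vs. v i * cnj (v j))" using step(3) B by blast
    have "\<forall>i<n. \<forall>j<n. A i j = (\<Sum>w\<leftarrow>v # vs. w i * cnj (w j))" using d vs by simp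
    then show "\<exists>vs. \<forall>i<n. \<forall>j<n. A i j = (\<Sum>v\<leftarrow>vs. v i * cnj (v j))" by blast
  qed
qed

lemma cholesky:
  assumes "hermf n A" "psdf n A"
  shows "\<exists>vs. \<forall>i<n. \<forall>j<n. A i j = (\<Sum>v\<leftarrow>vs. v i * cnj (v j))"
  using chol_all[of 0 n] assms unfolding zerof_def by auto

lemma jensen_sq:
  fixes p x :: "nat \<Rightarrow> real"
  assumes fin: "finite I" and p: "\<And>i. i \<in> I \<Longrightarrow> 0 \<le> p i" and sp: "sum p I = 1"
  shows "(\<Sum>i\<in>I. p i * x i)^2 \<le> (\<Sum>i\<in>I. p i * (x i)^2)"
proof -
  define \<mu> where "\<mu> = (\<Sum>i\<in>I. p i * x i)"
  have "0 \<le> (\<Sum>i\<in>I. p i * (x i - \<mu>)^2)" using p by (intro sum_nonneg) simp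
  also have "(\<Sum>i\<in>I. p i * (x i - \<mu>)^2) = (\<Sum>i\<in>I. p i * (x i)^2) - 2 * \<mu> * (\<Sum>i\<in>I. p i * x i) + \<mu>^2 * sum p I"
  proof -
    have "p i * (x i - \<mu>)^2 = p i * (x i)^2 - 2 * \<mu> * (p i * x i) + \<mu>^2 * p i" for i
      by (simp add: power2_diff algebra_simps)
    then show ?thesis by (simp add: sum.distrib sum_subtractf sum_distrib_left)
  qed
  finally show ?thesis unfolding sp \<mu>_def[symmetric] by (simp add: power2_eq_square)
qed

lemma convex_S:
  fixes m :: nat and p :: "nat \<Rightarrow> real"
  assumes M: "M \<in> carrier_mat 4 4" and Ms: "\<And>n. n < m \<Longrightarrow> Mn n \<in> carrier_mat 4 4"
  and ent: "\<And>i j. i < 4 \<Longrightarrow> j < 4 \<Longrightarrow> M$$(i,j) = (\<Sum>n<m. complex_of_real (p n) * Mn n $$ (i,j))"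
  and p: "\<And>n. n < m \<Longrightarrow> 0 \<le> p n" and sp: "(\<Sum>n<m. p n) = 1"
  shows "Scorr M \<le> (\<Sum>n<m. p n * Scorr (Mn n))"
proof -
  have t: "tcorr M k l = (\<Sum>n<m. complex_of_real (p n) * tcorr (Mn n) k l)" for k l
  proof -
    have "tcorr M k l = (\<Sum>i<4. \<Sum>j<4. (\<Sum>n<m. complex_of_real (p n) * Mn n $$ (i,j)) * (pauli k $$ (j div 2, i div 2) * pauli l $$ (j mod 2, i mod 2)))"
      unfolding tcorr_explicit[OF M] by (intro sum.cong refl) (simp add: ent)
    also have "\<dots> = (\<Sum>n<m. complex_of_real (p n) * (\<Sum>i<4. \<Sum>j<4. Mn n $$ (i,j) * (pauli k $$ (j div 2, i div 2) * pauli l $$ (j mod 2, i mod 2))))"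
      by (simp add: sum_distrib_left sum_distrib_right sum.swap[of _ "{..<m}"] mult.assoc)
    also have "\<dots> = (\<Sum>n<m. complex_of_real (p n) * tcorr (Mn n) k l)"
      by (intro sum.cong refl) (simp add: tcorr_explicit[OF Ms])
    finally show ?thesis .
  qed
  have r: "Re (tcorr M k l) = (\<Sum>n<m. p n * Re (tcorr (Mn n) k l))" for k l
    unfolding t by (simp add: Re_sum)
  have J: "(\<Sum>n<m. p n * Re (tcorr (Mn n) k l))^2 \<le> (\<Sum>n<m. p n * (Re (tcorr (Mn n) k l))^2)" for k l
    using jensen_sq[of "{..<m}" p "\<lambda>n. Re (tcorr (Mn n) k l)"] p sp by auto
  have "Scorr M = (\<Sum>k\<in>{1..3}. \<Sum>l\<in>{1..3}. (\<Sum>n<m. p n * Re (tcorr (Mn n) k l))^2)"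
    unfolding Scorr_def r ..
  also have "\<dots> \<le> (\<Sum>k\<in>{1..3}. \<Sum>l\<in>{1..3}. \<Sum>n<m. p n * (Re (tcorr (Mn n) k l))^2)"
    by (intro sum_mono J)
  also have "\<dots> = (\<Sum>n<m. p n * Scorr (Mn n))"
    unfolding Scorr_def by (simp add: sum_distrib_left sum.swap[of _ "{..<m}"])
  finally show ?thesis .
qed

lemma listsum_idx: "(\<Sum>(p,\<psi>)\<leftarrow>ds. f p \<psi>) = (\<Sum>n<length ds. f (fst (ds!n)) (snd (ds!n)))"
  unfolding sum_list_sum_nth by (simp add: atLeast0LessThan case_prod_beta)

lemma sum_list_filter0: "(\<And>x. x \<in> set xs \<Longrightarrow> \<not> P x \<Longrightarrow> g x = 0) \<Longrightarrow> sum_list (map g (filter P xs)) = sum_list (map g xs)"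
  by (induction xs) auto

lemma sum_list_swap: "sum_list (map (\<lambda>v. \<Sum>i\<in>I. g v i) xs) = (\<Sum>i\<in>I. sum_list (map (\<lambda>v. g v i) xs))"
  by (induction xs) (simp_all add: sum.distrib)

lemma Re_sum_list: "Re (sum_list (map g xs)) = sum_list (map (\<lambda>x. Re (g x)) xs)"
  by (induction xs) simp_all

lemma decomp_exists: assumes d: "density_matrix 8 \<rho>" shows "\<exists>ds. pure_decomp \<rho> ds"
proof -
  have c: "\<rho> \<in> carrier_mat 8 8" and adj: "adjoint \<rho> = \<rho>"
    and ps: "\<And>v. v \<in> carrier_vec 8 \<Longrightarrow> Re (\<Sum>i<8. \<Sum>j<8. cnj (v $ i) * \<rho> $$ (i,j) * v $ j) \<ge> 0"
    and tr: "mtrace \<rho> = 1" using d unfolding density_matrix_def by auto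
  define A where "A = (\<lambda>i j. \<rho> $$ (i,j))"
  have h: "hermf 8 A" unfolding hermf_def A_def
  proof (intro allI impI)
    fix i j :: nat assume i: "i < 8" and j: "j < 8"
    have "\<rho> $$ (j,i) = adjoint \<rho> $$ (j,i)" using adj by simp
    also have "\<dots> = cnj (\<rho> $$ (i,j))" using c i j by (simp add: adjoint_def)
    finally show "\<rho> $$ (j,i) = cnj (\<rho> $$ (i,j))" .
  qed
  have p: "psdf 8 A" unfolding psdf_def
  proof
    fix x :: "nat \<Rightarrow> complex"
    have e: "(\<Sum>i<8. \<Sum>j<8. cnj (vec 8 x $ i) * \<rho> $$ (i,j) * vec 8 x $ j) = Qf 8 A x"
      unfolding Qf_def A_def by (intro sum.cong refl) simp
    have "Re (\<Sum>i<8. \<Sum>j<8. cnj (vec 8 x $ i) * \<rho> $$ (i,j) * vec 8 x $ j) \<ge> 0" by (rule ps) simp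
    then show "0 \<le> Re (Qf 8 A x)" unfolding e .
  qed
  obtain vs where vs: "\<forall>i<8. \<forall>j<8. A i j = (\<Sum>v\<leftarrow>vs. v i * cnj (v j))" using cholesky[OF h p] by blast
  define nv where "nv = (\<lambda>v::nat \<Rightarrow> complex. \<Sum>i<8. (cmod (v i))^2)"
  define sv where "sv = (\<lambda>v. complex_of_real (sqrt (nv v)))"
  define ds where "ds = map (\<lambda>v. (nv v, vec 8 (\<lambda>i. v i / sv v))) (filter (\<lambda>v. nv v \<noteq> 0) vs)"
  have nv0: "0 \<le> nv v" for v unfolding nv_def by (simp add: sum_nonneg)
  have zero: "v i = 0" if "nv v = 0" "i < 8" for v i
  proof -
    have "\<forall>i\<in>{..<8}. (cmod (v i))^2 = 0" using that(1) unfolding nv_def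
      by (subst sum_nonneg_eq_0_iff[symmetric]) auto
    then show ?thesis using that(2) by simp
  qed
  have svsv: "sv v * cnj (sv v) = complex_of_real (nv v)" for v
    unfolding sv_def using nv0[of v] by (simp only: complex_cnj_complex_of_real of_real_mult[symmetric]) simp
  have unit: "unit_vec8 (vec 8 (\<lambda>i. v i / sv v))" if nz: "nv v \<noteq> 0" for v
  proof -
    have np: "0 < nv v" using nz nv0[of v] by simp
    have "(\<Sum>i<8. (cmod (vec 8 (\<lambda>i. v i / sv v) $ i))^2) = (\<Sum>i<8. (cmod (v i))^2 / nv v)"
      by (intro sum.cong refl) (simp add: sv_def norm_divide power_divide np less_imp_le)
    also have "\<dots> = 1" using np unfolding sum_divide_distrib[symmetric] nv_def by simp
    finally show ?thesis unfolding unit_vec8_def by simp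
  qed
  have d1: "\<forall>(p,\<psi>) \<in> set ds. p \<ge> 0 \<and> unit_vec8 \<psi>" unfolding ds_def using nv0 unit by auto
  have d2: "(\<Sum>(p,\<psi>)\<leftarrow>ds. p) = 1"
  proof -
    have "(\<Sum>(p,\<psi>)\<leftarrow>ds. p) = sum_list (map nv (filter (\<lambda>v. nv v \<noteq> 0) vs))"
      unfolding ds_def by (simp add: comp_def)
    also have "\<dots> = sum_list (map nv vs)" by (rule sum_list_filter0) simp
    also have "\<dots> = (\<Sum>i<8. sum_list (map (\<lambda>v. (cmod (v i))^2) vs))" unfolding nv_def by (rule sum_list_swap)
    also have "\<dots> = (\<Sum>i<8. Re (A i i))"
    proof (intro sum.cong refl)
      fix i :: nat assume "i \<in> {..<8}"
      then have "A i i = (\<Sum>v\<leftarrow>vs. v i * cnj (v i))" using vs by auto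
      also have "\<dots> = (\<Sum>v\<leftarrow>vs. complex_of_real ((cmod (v i))^2))" by (simp only: cnorm2)
      finally have "Re (A i i) = (\<Sum>v\<leftarrow>vs. Re (complex_of_real ((cmod (v i))^2)))" by (simp add: Re_sum_list)
      then show "sum_list (map (\<lambda>v. (cmod (v i))^2) vs) = Re (A i i)" by simp
    qed
    also have "\<dots> = Re (mtrace \<rho>)" using c unfolding mtrace_def A_def by (simp add: Re_sum)
    finally show ?thesis using tr by simp
  qed
  have d3: "\<rho> = mat 8 8 (\<lambda>(i,j). \<Sum>(p,\<psi>)\<leftarrow>ds. complex_of_real p * (\<psi> $ i * cnj (\<psi> $ j)))"
  proof (rule eq_matI)
    fix i j assume i: "i < dim_row (mat 8 8 (\<lambda>(i,j). \<Sum>(p,\<psi>)\<leftarrow>ds. complex_of_real p * (\<psi> $ i * cnj (\<psi> $ j))))"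
      and j: "j < dim_col (mat 8 8 (\<lambda>(i,j). \<Sum>(p,\<psi>)\<leftarrow>ds. complex_of_real p * (\<psi> $ i * cnj (\<psi> $ j))))"
    then have i: "i < 8" and j: "j < 8" by auto
    have "(\<Sum>(p,\<psi>)\<leftarrow>ds. complex_of_real p * (\<psi> $ i * cnj (\<psi> $ j)))
        = sum_list (map (\<lambda>v. complex_of_real (nv v) * (v i / sv v * cnj (v j / sv v))) (filter (\<lambda>v. nv v \<noteq> 0) vs))"
      unfolding ds_def using i j by (simp add: comp_def)
    also have "\<dots> = sum_list (map (\<lambda>v. v i * cnj (v j)) (filter (\<lambda>v. nv v \<noteq> 0) vs))"
    proof -
      have "complex_of_real (nv v) * (v i / sv v * cnj (v j / sv v)) = v i * cnj (v j)" if "nv v \<noteq> 0" for v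
      proof -
        have "sv v \<noteq> 0" using that nv0[of v] unfolding sv_def by simp
        then show ?thesis unfolding svsv[symmetric] by (simp add: field_simps)
      qed
      then show ?thesis by (intro arg_cong[where f = sum_list] map_cong) auto
    qed
    also have "\<dots> = sum_list (map (\<lambda>v. v i * cnj (v j)) vs)"
      by (rule sum_list_filter0) (use zero i in auto)
    also have "\<dots> = \<rho> $$ (i,j)" using vs i j unfolding A_def by auto
    finally show "\<rho> $$ (i,j) = mat 8 8 (\<lambda>(i,j). \<Sum>(p,\<psi>)\<leftarrow>ds. complex_of_real p * (\<psi> $ i * cnj (\<psi> $ j))) $$ (i,j)"
      using i j by simp
  next
    show "dim_row \<rho> = dim_row (mat 8 8 (\<lambda>(i,j). \<Sum>(p,\<psi>)\<leftarrow>ds. complex_of_real p * (\<psi> $ i * cnj (\<psi> $ j))))" using c by simp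
    show "dim_col \<rho> = dim_col (mat 8 8 (\<lambda>(i,j). \<Sum>(p,\<psi>)\<leftarrow>ds. complex_of_real p * (\<psi> $ i * cnj (\<psi> $ j))))" using c by simp
  qed
  show ?thesis using d1 d2 d3 unfolding pure_decomp_def by blast
qed

lemma decomp_bound:
  assumes pd: "pure_decomp \<rho> ds"
  shows "Smax \<rho> \<le> 3 - 2 * (\<Sum>(p,\<psi>)\<leftarrow>ds. p * tau_pure \<psi>)"
proof -
  define m where "m = length ds"
  define p where "p = (\<lambda>n. fst (ds!n))"
  define \<psi> where "\<psi> = (\<lambda>n. snd (ds!n))"
  have mem: "n < m \<Longrightarrow> (p n, \<psi> n) \<in> set ds" for n unfolding m_def p_def \<psi>_def by simp
  have p0: "n < m \<Longrightarrow> 0 \<le> p n" and u: "n < m \<Longrightarrow> unit_vec8 (\<psi> n)" for n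
    using pd mem unfolding pure_decomp_def by auto
  have c: "n < m \<Longrightarrow> \<psi> n \<in> carrier_vec 8" for n using u unfolding unit_vec8_def by auto
  have cd: "n < m \<Longrightarrow> dim_vec (\<psi> n) = 8" for n using c by auto
  have sp: "(\<Sum>n<m. p n) = 1" using pd unfolding pure_decomp_def listsum_idx m_def p_def by simp
  have ent: "\<rho> $$ (i,j) = (\<Sum>n<m. complex_of_real (p n) * (\<psi> n $ i * cnj (\<psi> n $ j)))" if "i < 8" "j < 8" for i j
  proof -
    have "\<rho> = mat 8 8 (\<lambda>(i,j). \<Sum>(p,\<psi>)\<leftarrow>ds. complex_of_real p * (\<psi> $ i * cnj (\<psi> $ j)))"
      using pd unfolding pure_decomp_def by blast
    then show ?thesis using that unfolding listsum_idx m_def p_def \<psi>_def by simp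
  qed
  have T: "(\<Sum>(p,\<psi>)\<leftarrow>ds. p * tau_pure \<psi>) = (\<Sum>n<m. p n * tau_pure (\<psi> n))"
    unfolding listsum_idx m_def p_def \<psi>_def ..
  have key: "Scorr M \<le> 3 - 2 * (\<Sum>n<m. p n * tau_pure (\<psi> n))"
    if M: "M \<in> carrier_mat 4 4" and Ms: "\<And>n. n < m \<Longrightarrow> Mn n \<in> carrier_mat 4 4"
    and e: "\<And>i j. i < 4 \<Longrightarrow> j < 4 \<Longrightarrow> M$$(i,j) = (\<Sum>n<m. complex_of_real (p n) * Mn n $$ (i,j))"
    and b: "\<And>n. n < m \<Longrightarrow> Scorr (Mn n) + 2 * tau_pure (\<psi> n) \<le> 3" for M Mn
  proof -
    have "Scorr M \<le> (\<Sum>n<m. p n * Scorr (Mn n))" by (rule convex_S[OF M Ms e p0 sp])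
    also have "\<dots> \<le> (\<Sum>n<m. p n * (3 - 2 * tau_pure (\<psi> n)))"
      by (intro sum_mono mult_left_mono) (use b p0 in \<open>auto simp: algebra_simps\<close>)
    also have "\<dots> = 3 * (\<Sum>n<m. p n) - 2 * (\<Sum>n<m. p n * tau_pure (\<psi> n))"
      by (simp add: algebra_simps sum_subtractf sum_distrib_left)
    finally show ?thesis using sp by simp
  qed
  have AB: "Scorr (red_AB \<rho>) \<le> 3 - 2 * (\<Sum>n<m. p n * tau_pure (\<psi> n))"
  proof (rule key)
    show "red_AB \<rho> \<in> carrier_mat 4 4" by (simp add: red_AB_def)
    show "red_AB (proj (\<psi> n)) \<in> carrier_mat 4 4" for n by (simp add: red_AB_def)
    show "Scorr (red_AB (proj (\<psi> n))) + 2 * tau_pure (\<psi> n) \<le> 3" if "n < m" for n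
      using pure_bounds(2)[OF u[OF that]] .
    show "red_AB \<rho> $$ (i,j) = (\<Sum>n<m. complex_of_real (p n) * red_AB (proj (\<psi> n)) $$ (i,j))" if "i < 4" "j < 4" for i j
    proof -
      have "red_AB \<rho> $$ (i,j) = \<rho> $$ (2*i, 2*j) + \<rho> $$ (2*i+1, 2*j+1)" using that by (simp add: red_AB_def sum2)
      also have "\<dots> = (\<Sum>n<m. complex_of_real (p n) * (\<psi> n $ (2*i) * cnj (\<psi> n $ (2*j)) + \<psi> n $ (2*i+1) * cnj (\<psi> n $ (2*j+1))))"
        using that by (simp add: ent sum.distrib distrib_left)
      also have "\<dots> = (\<Sum>n<m. complex_of_real (p n) * red_AB (proj (\<psi> n)) $$ (i,j))"
        by (intro sum.cong refl) (use that cd in \<open>simp add: red_AB_def sum2 proj_def\<close>)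
      finally show ?thesis .
    qed
  qed
  have AC: "Scorr (red_AC \<rho>) \<le> 3 - 2 * (\<Sum>n<m. p n * tau_pure (\<psi> n))"
  proof (rule key)
    show "red_AC \<rho> \<in> carrier_mat 4 4" by (simp add: red_AC_def)
    show "red_AC (proj (\<psi> n)) \<in> carrier_mat 4 4" for n by (simp add: red_AC_def)
    show "Scorr (red_AC (proj (\<psi> n))) + 2 * tau_pure (\<psi> n) \<le> 3" if "n < m" for n
      using pure_bounds(3)[OF u[OF that]] .
    show "red_AC \<rho> $$ (i,j) = (\<Sum>n<m. complex_of_real (p n) * red_AC (proj (\<psi> n)) $$ (i,j))" if "i < 4" "j < 4" for i j
    proof -
      define a where "a = 4*(i div 2) + i mod 2"
      define b where "b = 4*(j div 2) + j mod 2"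
      have ab: "a + 2 < 8" "b + 2 < 8" using that unfolding a_def b_def less4 by auto
      have "red_AC \<rho> $$ (i,j) = \<rho> $$ (a, b) + \<rho> $$ (a+2, b+2)" using that unfolding a_def b_def by (simp add: red_AC_def sum2 algebra_simps)
      also have "\<dots> = (\<Sum>n<m. complex_of_real (p n) * (\<psi> n $ a * cnj (\<psi> n $ b) + \<psi> n $ (a+2) * cnj (\<psi> n $ (b+2))))"
        using ab by (simp add: ent sum.distrib distrib_left)
      also have "\<dots> = (\<Sum>n<m. complex_of_real (p n) * red_AC (proj (\<psi> n)) $$ (i,j))"
        by (intro sum.cong refl) (use that cd ab in \<open>simp add: red_AC_def sum2 proj_def a_def b_def algebra_simps\<close>)
      finally show ?thesis .
    qed
  qed
  have BC: "Scorr (red_BC \<rho>) \<le> 3 - 2 * (\<Sum>n<m. p n * tau_pure (\<psi> n))"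
  proof (rule key)
    show "red_BC \<rho> \<in> carrier_mat 4 4" by (simp add: red_BC_def)
    show "red_BC (proj (\<psi> n)) \<in> carrier_mat 4 4" for n by (simp add: red_BC_def)
    show "Scorr (red_BC (proj (\<psi> n))) + 2 * tau_pure (\<psi> n) \<le> 3" if "n < m" for n
      using pure_bounds(4)[OF u[OF that]] .
    show "red_BC \<rho> $$ (i,j) = (\<Sum>n<m. complex_of_real (p n) * red_BC (proj (\<psi> n)) $$ (i,j))" if "i < 4" "j < 4" for i j
    proof -
      have "red_BC \<rho> $$ (i,j) = \<rho> $$ (i, j) + \<rho> $$ (4+i, 4+j)" using that by (simp add: red_BC_def sum2)
      also have "\<dots> = (\<Sum>n<m. complex_of_real (p n) * (\<psi> n $ i * cnj (\<psi> n $ j) + \<psi> n $ (4+i) * cnj (\<psi> n $ (4+j))))"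
        using that by (simp add: ent sum.distrib distrib_left)
      also have "\<dots> = (\<Sum>n<m. complex_of_real (p n) * red_BC (proj (\<psi> n)) $$ (i,j))"
        by (intro sum.cong refl) (use that cd in \<open>simp add: red_BC_def sum2 proj_def\<close>)
      finally show ?thesis .
    qed
  qed
  show ?thesis unfolding Smax_def T using AB AC BC by simp
qed

lemma tau_nonneg_sum: assumes "pure_decomp \<rho> ds" shows "0 \<le> (\<Sum>(p,\<psi>)\<leftarrow>ds. p * tau_pure \<psi>)"
proof -
  have "\<forall>(p,\<psi>) \<in> set ds. p \<ge> 0 \<and> unit_vec8 \<psi>" using assms unfolding pure_decomp_def by blast
  then show ?thesis by (intro sum_list_nonneg) (auto intro!: mult_nonneg_nonneg pure_bounds(1))
qed

theorem theorem4:
  fixes \<rho> :: "complex mat"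
  assumes "density_matrix 8 \<rho>"
  shows "Smax \<rho> + 2 * tau \<rho> \<le> 3"
proof -
  obtain ds where pd: "pure_decomp \<rho> ds" using decomp_exists[OF assms] by blast
  let ?S = "{(\<Sum>(p,\<psi>)\<leftarrow>ds. p * tau_pure \<psi>) | ds. pure_decomp \<rho> ds}"
  have bdd: "bdd_below ?S" by (rule bdd_belowI[of _ 0]) (auto intro: tau_nonneg_sum)
  have "tau \<rho> \<le> (\<Sum>(p,\<psi>)\<leftarrow>ds. p * tau_pure \<psi>)"
    unfolding tau_def by (rule cInf_lower[OF _ bdd]) (use pd in blast)
  then show ?thesis using decomp_bound[OF pd] by linarith
qed

end
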